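(* Let $s_0,s_1,s_2$ be the $3$-hyperbolic functions and let $\ell_\nu^-=\{t\zeta_\nu: t\le 0\}$ for $\nu=0,1,2$. Then none of $s_0,s_1,s_2$ vanishes on $\Omega=\mathbb{C}\setminus\bigcup_{\nu=0}^{2}\ell_\nu^-$; that is, every zero of each $s_k$ lies on one of the three rays $\ell_0^-,\ell_1^-,\ell_2^-$ (which are the bisectors of the three sectors into which the rays $\{t\zeta_\nu: t>0\}$ divide the plane).
   Context: Let $\zeta_m=e^{2\pi i m/3}$, $m=0,1,2$. The $3$-hyperbolic functions are $s_k(z)=\frac13\sum_{m=0}^{2}\zeta_m^{-k}e^{z\zeta_m}$, $k=0,1,2$, $z\in\mathbb{C}$. *)

theory Defs
  imports "HOL-Analysis.Analysis"
begin

definition zeta3 :: "nat \<Rightarrow> complex" where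
  "zeta3 m = exp (2 * pi * \<i> * of_nat m / 3)"

definition hyp3 :: "nat \<Rightarrow> complex \<Rightarrow> complex" where
  "hyp3 k z = (1/3) * (\<Sum>m<3. inverse (zeta3 m) ^ k * exp (z * zeta3 m))"

definition neg_ray :: "nat \<Rightarrow> complex set" where
  "neg_ray \<nu> = {complex_of_real t * zeta3 \<nu> | t. t \<le> 0}"

end

theory Submission imports Defs begin
lemma amgm_exp: "0 \<le> exp u + exp (-u) - (2::real)"
proof -
  have a: "exp u > 0" by simp
  have "exp u + exp (-u) - 2 = (exp u - 1)^2 / exp u"
    using a by (simp add: exp_minus field_simps power2_eq_square)
  also have "\<dots> \<ge> 0" using a by simp
  finally show ?thesis by simp
qed
lemma sinh_lin: fixes x::real assumes "0 \<le> x" shows "2*x \<le> exp x - exp (-x)"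
proof -
  let ?f = "\<lambda>x. exp x - exp (-x) - 2*x"
  have "?f 0 \<le> ?f x"
  proof (rule DERIV_nonneg_imp_nondecreasing[OF assms])
    fix u :: real
    have "(?f has_real_derivative exp u + exp (-u) - 2) (at u)"
      by (auto intro!: derivative_eq_intros simp: field_simps)
    then show "\<exists>y. (?f has_real_derivative y) (at u) \<and> 0 \<le> y" using amgm_exp by blast
  qed
  then show ?thesis by simp
qed
lemma poly_ineq:
  fixes P E :: real
  assumes P: "0 < P" and E: "1 + P + P^2/2 \<le> E"
  shows "4 - 4*E + 6*P^2*E < (E^2 - 1)^2"
proof -
  have "P^2/2 \<ge> 0" by simp
  then have E1: "E - 1 \<ge> P" using E by linarith
  have sq: "(E - 1)^2 \<ge> P^2" using E1 P by (simp add: power_mono)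
  have id: "(E^2 - 1)^2 = (E-1)^2 * (E+1)^2" by (simp add: power2_eq_square algebra_simps)
  have low: "(E-1)^2 * (E+1)^2 \<ge> P^2 * (E+1)^2" using sq by (simp add: mult_right_mono)
  show ?thesis
  proof (cases "(E+1)^2 \<ge> 6*E")
    case True
    have "P^2 * (E+1)^2 \<ge> P^2 * (6*E)" using True by (simp add: mult_left_mono)
    moreover have "4 - 4*E < 0" using E1 P by linarith
    moreover have "6*P^2*E = P^2*(6*E)" by simp
    ultimately show ?thesis using id low by linarith
  next
    case False
    have "E < 4"
    proof (rule ccontr)
      assume "\<not> E < 4"
      then have "E*(E-4) \<ge> 0" by simp
      then show False using False by (simp add: power2_eq_square algebra_simps)
    qed
    have P4: "P < 4"
    proof (rule ccontr)
      assume "\<not> P < 4"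
      then have "4*4 \<le> P*P" by (intro mult_mono) auto
      then have "P^2 \<ge> 16" by (simp add: power2_eq_square)
      then show False using E \<open>E<4\<close> P by linarith
    qed
    have "3*P^2 < 4*P + 2*P^2" using P P4 by (simp add: power2_eq_square)
    also have "\<dots> \<le> 4*(E-1)" using E by (simp add: field_simps)
    finally have a: "3*P^2 < 4*(E-1)" .
    have b: "P^2*(6*E - (E+1)^2) \<le> 3*P^2"
    proof -
      have "6*E - (E+1)^2 = 3 - (E-2)^2" by (simp add: power2_eq_square algebra_simps)
      moreover have "(E-2)^2 \<ge> 0" by simp
      ultimately have "6*E - (E+1)^2 \<le> 3" by linarith
      then have "P^2 * (6*E - (E+1)^2) \<le> P^2 * 3" by (intro mult_left_mono) auto
      then show ?thesis by simp
    qed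
    have "4 - 4*E + 6*P^2*E = -4*(E-1) + P^2*(E+1)^2 + P^2*(6*E - (E+1)^2)"
      by (simp add: algebra_simps)
    also have "\<dots> < P^2*(E+1)^2" using a b by linarith
    finally show ?thesis using id low by linarith
  qed
qed
lemma exp_quad: fixes x::real assumes "0 \<le> x" shows "1 + x + x^2/2 \<le> exp x"
proof -
  let ?f = "\<lambda>x. exp x - 1 - x - x^2/2"
  have "?f 0 \<le> ?f x"
  proof (rule DERIV_nonneg_imp_nondecreasing[OF assms])
    fix u :: real
    have "(?f has_real_derivative exp u - 1 - u) (at u)"
      by (auto intro!: derivative_eq_intros simp: field_simps)
    moreover have "0 \<le> exp u - 1 - u" using exp_ge_add_one_self[of u] by linarith
    ultimately show "\<exists>y. (?f has_real_derivative y) (at u) \<and> 0 \<le> y" by blast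
  qed
  then show ?thesis by simp
qed

lemma key1D:
  fixes P :: real assumes P: "0 < P"
  shows "(exp (-P) * cos (sqrt 3 * P) - 2)^2 * (exp P - exp (-P))^2
         + (exp (-P))^2 * (sin (sqrt 3 * P))^2 * (exp P + exp (-P))^2
         < (exp P + exp (-P))^2 * (exp P - exp (-P))^2"
proof -
  define E where "E = exp P"
  define R where "R = exp (-P)"
  define S where "S = E - R"
  define C where "C = E + R"
  define c where "c = cos (sqrt 3 * P)"
  define qq where "qq = sin (sqrt 3 * P)"
  have Epos: "E > 0" by (simp add: E_def)
  have ER: "E * R = 1" by (simp add: E_def R_def exp_minus)
  have EQ: "1 + P + P^2/2 \<le> E" unfolding E_def using exp_quad P by simp
  have S2P: "2*P \<le> S" unfolding S_def E_def R_def using sinh_lin P by simp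
  have S2: "4*P^2 \<le> S^2"
  proof -
    have "(2*P)^2 \<le> S^2" using S2P P by (intro power_mono) auto
    then show ?thesis by (simp add: power_mult_distrib)
  qed
  have Spos: "S > 0" using S2P P by linarith
  have qq2: "qq^2 \<le> 3*P^2"
  proof -
    have "\<bar>qq\<bar> \<le> \<bar>sqrt 3 * P\<bar>" unfolding qq_def by (rule abs_sin_x_le_abs_x)
    then have "\<bar>qq\<bar>^2 \<le> \<bar>sqrt 3 * P\<bar>^2" by (intro power_mono) auto
    then show ?thesis by (simp add: power_mult_distrib)
  qed
  have cb: "c \<ge> 1 - 3*P^2/2"
  proof -
    define w where "w = sqrt 3 * P / 2"
    have "c = cos (2*w)" by (simp add: c_def w_def)
    also have "\<dots> = 1 - 2 * sin w ^ 2" by (rule cos_double_sin)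
    finally have c1: "c = 1 - 2 * sin w ^ 2" .
    have "\<bar>sin w\<bar> \<le> \<bar>w\<bar>" by (rule abs_sin_x_le_abs_x)
    then have "\<bar>sin w\<bar>^2 \<le> \<bar>w\<bar>^2" by (intro power_mono) auto
    then have "sin w ^ 2 \<le> 3*P^2/4" by (simp add: w_def power_mult_distrib power_divide)
    then show ?thesis using c1 by linarith
  qed
  have poly: "4 - 4*E + 6*P^2*E < (E^2 - 1)^2" using poly_ineq[OF P EQ] .
  have ES: "E * S = E^2 - 1" using ER by (simp add: S_def power2_eq_square algebra_simps)
  have CS: "C^2 = S^2 + 4" using ER by (simp add: S_def C_def power2_eq_square algebra_simps)
  have cs1: "c^2 + qq^2 = 1" by (simp add: c_def qq_def)
  have main: "S^2 - 4*c*E*S^2 + 4* qq^2 < E^2*S^4"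
  proof -
    have a: "4* qq^2 \<le> 3*S^2" using qq2 S2 by linarith
    have b: "(1 - 3*P^2/2) * (E*S^2) \<le> c * (E*S^2)"
      using cb Epos by (intro mult_right_mono) auto
    have "S^2 - 4*c*E*S^2 + 4* qq^2 \<le> S^2 * (4 - 4*E + 6*P^2*E)"
      using a b by (simp add: algebra_simps)
    also have "\<dots> < S^2 * (E^2 - 1)^2" using poly Spos by (intro mult_strict_left_mono) auto
    also have "\<dots> = E^2*S^4" unfolding ES[symmetric] by (simp add: power2_eq_square power4_eq_xxxx)
    finally show ?thesis .
  qed
  have eq: "E^2 * ((R*c - 2)^2 * S^2 + R^2 * qq^2 * C^2) = (c - 2*E)^2 * S^2 + qq^2 * C^2"
  proof -
    have h1: "E*(R*c - 2) = c - 2*E" using ER by (simp add: algebra_simps)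
    have "E^2 * ((R*c - 2)^2 * S^2 + R^2 * qq^2 * C^2) = (E*(R*c - 2))^2 * S^2 + (E*R)^2 * qq^2 * C^2"
      by (simp add: power2_eq_square algebra_simps)
    then show ?thesis using h1 ER by simp
  qed
  have "(c - 2*E)^2 * S^2 + qq^2 * C^2 = S^2 - 4*c*E*S^2 + 4* qq^2 + 4*E^2*S^2"
  proof -
    have "(c - 2*E)^2 * S^2 + qq^2 * C^2 = S^2*(c^2+qq^2) - 4*c*E*S^2 + 4* qq^2 + 4*E^2*S^2"
      using CS by (simp add: power2_eq_square algebra_simps)
    then show ?thesis using cs1 by simp
  qed
  also have "\<dots> < E^2*S^4 + 4*E^2*S^2" using main by linarith
  also have "\<dots> = E^2 * (C^2 * S^2)" using CS by (simp add: power2_eq_square power4_eq_xxxx algebra_simps)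
  finally have "E^2 * ((R*c - 2)^2 * S^2 + R^2 * qq^2 * C^2) < E^2 * (C^2 * S^2)" using eq by simp
  then have "(R*c - 2)^2 * S^2 + R^2 * qq^2 * C^2 < C^2 * S^2"
    using Epos by (simp add: mult_less_cancel_left)
  then show ?thesis by (simp add: E_def R_def S_def C_def c_def qq_def algebra_simps)
qed

lemma quad_convex:
  fixes a b g K R R0 :: real
  assumes a: "a \<ge> 0" and R: "0 \<le> R" "R \<le> R0" and g: "g < K" and f0: "a*R0^2 + b*R0 + g < K"
  shows "a*R^2 + b*R + g < K"
proof (cases "R0 = 0")
  case True then show ?thesis using R g by simp
next
  case False
  then have R0: "R0 > 0" using R by linarith
  define m where "m = max g (a*R0^2 + b*R0 + g)"
  have mK: "m < K" using g f0 by (simp add: m_def)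
  have "a*R*R0*(R - R0) \<le> 0"
  proof -
    have "a*R*R0 \<ge> 0" using a R R0 by simp
    then show ?thesis using R by (simp add: mult_nonneg_nonpos)
  qed
  moreover have "R0 * (a*R^2 + b*R + g) = (R0 - R)*g + R*(a*R0^2 + b*R0 + g) + a*R*R0*(R - R0)"
    by (simp add: power2_eq_square algebra_simps)
  moreover have "(R0 - R)*g \<le> (R0 - R)*m" using R by (intro mult_left_mono) (auto simp: m_def)
  moreover have "R*(a*R0^2 + b*R0 + g) \<le> R*m" using R by (intro mult_left_mono) (auto simp: m_def)
  ultimately have "R0 * (a*R^2 + b*R + g) \<le> R0 * m" by (simp add: algebra_simps)
  also have "\<dots> < R0 * K" using mK R0 by simp
  finally show ?thesis using R0 by simp
qed

lemma noL:
  fixes w :: complex and R :: real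
  assumes p0: "Re w \<noteq> 0" and R0: "0 \<le> R" and Rle: "R \<le> exp (-\<bar>Re w\<bar>)"
  shows "exp w + exp (-w) + 2 \<noteq> R * cis (sqrt 3 * Re w)"
proof
  assume eq: "exp w + exp (-w) + 2 = R * cis (sqrt 3 * Re w)"
  define p where "p = Re w"
  define D where "D = Im w"
  define P where "P = \<bar>p\<bar>"
  have P: "P > 0" using p0 by (simp add: P_def p_def)
  have re: "(exp p + exp (-p)) * cos D + 2 = R * cos (sqrt 3 * p)"
    using arg_cong[OF eq, of Re] by (simp add: p_def D_def Re_exp Im_exp algebra_simps)
  have im: "(exp p - exp (-p)) * sin D = R * sin (sqrt 3 * p)"
    using arg_cong[OF eq, of Im] by (simp add: p_def D_def Re_exp Im_exp algebra_simps)
  define S where "S = exp P - exp (-P)"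
  define C where "C = exp P + exp (-P)"
  define c where "c = cos (sqrt 3 * P)"
  define q where "q = sin (sqrt 3 * P)"
  have C1: "exp p + exp (-p) = C" by (cases "p \<ge> 0") (auto simp: C_def P_def)
  have S1: "(exp p - exp (-p))^2 = S^2" by (cases "p \<ge> 0") (auto simp: S_def P_def power2_commute)
  have c1: "cos (sqrt 3 * p) = c" by (cases "p \<ge> 0") (auto simp: c_def P_def)
  have q1: "(sin (sqrt 3 * p))^2 = q^2" by (cases "p \<ge> 0") (auto simp: q_def P_def)
  have re2: "C * cos D = R * c - 2" using re C1 c1 by simp
  have "(exp p - exp (-p))^2 * (sin D)^2 = R^2 * (sin (sqrt 3 * p))^2"
    using arg_cong[OF im, of "\<lambda>x. x^2"] by (simp add: power_mult_distrib)
  then have im2: "S^2 * (sin D)^2 = R^2 * q^2" using S1 q1 by simp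
  have key: "(R*c - 2)^2 * S^2 + R^2 * q^2 * C^2 = C^2 * S^2"
  proof -
    have "(R*c - 2)^2 * S^2 + R^2 * q^2 * C^2 = (C * cos D)^2 * S^2 + S^2 * (sin D)^2 * C^2"
      using re2 im2 by simp
    also have "\<dots> = C^2 * S^2 * ((cos D)^2 + (sin D)^2)" by algebra
    finally show ?thesis by simp
  qed
  have k1: "(exp (-P) * c - 2)^2 * S^2 + (exp (-P))^2 * q^2 * C^2 < C^2 * S^2"
    using key1D[OF P] by (simp add: S_def C_def c_def q_def)
  have Spos: "S > 0"
  proof -
    have "exp (-P) < exp P" using P by simp
    then show ?thesis by (simp add: S_def)
  qed
  have CS: "C^2 = S^2 + 4"
    by (simp add: S_def C_def power2_eq_square algebra_simps exp_minus field_simps)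
  have g: "4 * S^2 < C^2 * S^2" using CS Spos by (simp add: algebra_simps)
  have A1: "0 \<le> c^2 * S^2 + q^2 * C^2" by simp
  have A3: "R \<le> exp (-P)" using Rle by (simp add: P_def p_def)
  have A5: "(c^2 * S^2 + q^2 * C^2) * (exp (-P))^2 + (-4*c*S^2) * exp (-P) + 4*S^2 < C^2 * S^2"
      using k1 by (simp add: power2_eq_square algebra_simps)
  have "(c^2 * S^2 + q^2 * C^2) * R^2 + (-4*c*S^2) * R + 4*S^2 < C^2 * S^2"
    by (rule quad_convex[OF A1 R0 A3 g A5])
  moreover have "(c^2 * S^2 + q^2 * C^2) * R^2 + (-4*c*S^2) * R + 4*S^2 = (R*c - 2)^2 * S^2 + R^2 * q^2 * C^2"
    by (simp add: power2_eq_square algebra_simps)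
  ultimately show False using key by simp
qed

lemma noM:
  fixes a b c v :: complex
  assumes sum: "a + b + c = 0" and prod: "a*b*c = 1"
    and nrm: "norm a = norm b * exp (sqrt 3 * Im v)"
    and cub: "c^3 = exp (3 * v)"
    and t0: "Im v \<noteq> 0" and sec: "sqrt 3 * Re v + \<bar>Im v\<bar> \<le> 0"
  shows False
proof -
  have a0: "a \<noteq> 0" and b0: "b \<noteq> 0" using prod by auto
  have cc: "c = - (a + b)" using sum by (simp add: algebra_simps eq_neg_iff_add_eq_0)
  have c3: "c^3 = a/b + b/a + 2"
  proof -
    have c2: "c^2 = (a+b)^2" unfolding cc by (simp add: power2_eq_square algebra_simps)
    have "c^3 * (a*b) = c^2 * (a*b*c)" by (simp add: power2_eq_square power3_eq_cube algebra_simps)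
    also have "\<dots> = (a+b)^2 * (a*b*c)" using c2 by simp
    also have "\<dots> = (a+b)^2" using prod by simp
    finally have "c^3 * (a*b) = (a+b)^2" .
    then show ?thesis using a0 b0 by (simp add: field_simps power2_eq_square)
  qed
  define u where "u = a / b"
  have u0: "u \<noteq> 0" using a0 b0 by (simp add: u_def)
  define w where "w = Ln u"
  have ew: "exp w = u" using u0 by (simp add: w_def)
  have emw: "exp (-w) = b / a" using ew by (simp add: exp_minus u_def)
  have nu: "norm u = exp (sqrt 3 * Im v)" using nrm b0 by (simp add: u_def norm_divide)
  have rew: "Re w = sqrt 3 * Im v" using u0 nu by (simp add: w_def Re_Ln)
  have R: "exp (3 * v) = exp (3 * Re v) * cis (sqrt 3 * Re w)"
    by (simp add: exp_eq_polar rew mult.assoc[symmetric])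
  have le: "exp (3 * Re v) \<le> exp (- \<bar>Re w\<bar>)"
  proof -
    have "sqrt 3 * (sqrt 3 * Re v + \<bar>Im v\<bar>) \<le> 0" using sec by (simp add: mult_nonneg_nonpos)
    then have "3 * Re v \<le> - \<bar>Re w\<bar>" by (simp add: rew abs_mult algebra_simps)
    then show ?thesis by simp
  qed
  have "exp w + exp (-w) + 2 \<noteq> exp (3 * Re v) * cis (sqrt 3 * Re w)"
    by (rule noL) (use t0 le in \<open>auto simp: rew\<close>)
  moreover have "exp w + exp (-w) + 2 = exp (3 * Re v) * cis (sqrt 3 * Re w)"
    using c3 cub R ew emw by (simp add: u_def)
  ultimately show False by simp
qed

lemma sectors:
  fixes X y :: real
  assumes "\<not>(y=0 \<and> X\<le>0)" "\<not>(y = -X \<and> X \<ge> 0)" "\<not>(y = X \<and> X \<ge> 0)"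
  shows "(y\<noteq>0 \<and> X + \<bar>y\<bar> \<le> 0) \<or> (X/2 - y/2 \<noteq> 0 \<and> -X/2 - 3*y/2 + \<bar>X/2 - y/2\<bar> \<le> 0)
     \<or> (-X/2 - y/2 \<noteq> 0 \<and> -X/2 + 3*y/2 + \<bar>-X/2 - y/2\<bar> \<le> 0)"
  using assms by arith

definition om :: complex where "om = Complex (-1/2) (sqrt 3/2)"

lemma zeta3_pow: "zeta3 m = zeta3 1 ^ m"
proof -
  have "zeta3 m = exp (of_nat m * (2 * pi * \<i> / 3))" by (simp add: zeta3_def algebra_simps)
  also have "\<dots> = exp (2 * pi * \<i> / 3) ^ m" by (rule exp_of_nat_mult)
  finally show ?thesis by (simp add: zeta3_def)
qed

lemma zeta3_1: "zeta3 1 = om"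
proof -
  have "zeta3 1 = exp (\<i> * complex_of_real (2*pi/3))" by (simp add: zeta3_def algebra_simps)
  also have "\<dots> = cis (2*pi/3)" by (simp add: cis_conv_exp)
  also have "\<dots> = om" by (simp add: om_def complex_eq_iff cos_120 cos_120' sin_120' mult.commute)
  finally show ?thesis .
qed

lemma om2: "om^2 = Complex (-1/2) (-sqrt 3/2)"
  by (simp add: om_def power2_eq_square complex_eq_iff)

lemma om3: "om^3 = 1"
proof -
  have "om^3 = om^2 * om" by (simp add: power3_eq_cube power2_eq_square)
  also have "\<dots> = 1" unfolding om2 by (simp add: om_def complex_eq_iff)
  finally show ?thesis .
qed

lemma om_sum: "1 + om + om^2 = 0"
  unfolding om2 by (simp add: om_def complex_eq_iff)

lemma norm_om: "norm om = 1"
  by (simp add: om_def cmod_def power2_eq_square)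

lemma cube_T: "(inverse w ^ k * exp (z * w))^3 = exp (3 * (z * w))" if "w^3 = 1" for w z :: complex
proof -
  have "(inverse w ^ k)^3 = inverse (w^3) ^ k"
    by (simp add: power_mult[symmetric] mult.commute power_inverse)
  also have "\<dots> = 1" using that by simp
  finally have a: "(inverse w ^ k)^3 = 1" .
  have b: "exp (z*w)^3 = exp (3 * (z*w))" using exp_of_nat_mult[of 3 "z*w"] by simp
  show ?thesis using a b by (simp add: power_mult_distrib)
qed

theorem proposition5p1:
  fixes k :: nat and z :: complex
  assumes "k \<le> 2"
    and "z \<notin> (\<Union>\<nu>\<in>{0,1,2}. neg_ray \<nu>)"
  shows "hyp3 k z \<noteq> 0"
proof
  assume h0: "hyp3 k z = 0"
  have z0: "zeta3 0 = 1" by (simp add: zeta3_def)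
  have z1: "zeta3 1 = om" by (rule zeta3_1)
  have z2: "zeta3 2 = om^2" using zeta3_pow[of 2] z1 by simp
  define T0 where "T0 = exp z"
  define T1 where "T1 = inverse om ^ k * exp (z * om)"
  define T2 where "T2 = inverse (om^2) ^ k * exp (z * om^2)"
  have s3: "(\<Sum>m<3. f m) = f 0 + f 1 + f 2" for f :: "nat \<Rightarrow> complex"
    by (simp add: eval_nat_numeral)
  have "hyp3 k z = (1/3) * (T0 + T1 + T2)"
    unfolding hyp3_def s3 z0 z1 z2 T0_def T1_def T2_def by simp
  then have sum: "T0 + T1 + T2 = 0" using h0 by simp
  have prod: "T0 * T1 * T2 = 1"
  proof -
    have "T0 * T1 * T2 = (inverse om ^ k * inverse (om^2) ^ k) * (exp z * exp (z* om) * exp (z* om^2))"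
      by (simp add: T0_def T1_def T2_def algebra_simps)
    also have "inverse om ^ k * inverse (om^2) ^ k = inverse (om^3) ^ k"
      by (simp add: power_mult_distrib[symmetric] power3_eq_cube power2_eq_square mult.assoc)
    also have "exp z * exp (z* om) * exp (z* om^2) = exp (z * (1 + om + om^2))"
      by (simp add: exp_add[symmetric] algebra_simps)
    finally show ?thesis by (simp add: om3 om_sum)
  qed
  have nT0: "norm T0 = exp (Re z)" by (simp add: T0_def)
  have nT1: "norm T1 = exp (Re (z* om))" by (simp add: T1_def norm_mult norm_power norm_inverse norm_om)
  have nT2: "norm T2 = exp (Re (z* om^2))" by (simp add: T2_def norm_mult norm_power norm_inverse norm_om)
  have cT0: "T0^3 = exp (3 * z)" using cube_T[of 1 k z] by (simp add: T0_def)
  have cT1: "T1^3 = exp (3 * (z* om))" using cube_T[of om k z] om3 by (simp add: T1_def)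
  have cT2: "T2^3 = exp (3 * (z* om^2))"
  proof -
    have "(om^2)^3 = (om^3)^2" by (simp add: power_mult[symmetric] mult.commute)
    then have "(om^2)^3 = 1" using om3 by simp
    then show ?thesis using cube_T[of "om^2" k z] by (simp add: T2_def)
  qed
  obtain x y where zxy: "z = Complex x y" by (rule complex.exhaust)
  define r where "r = sqrt 3"
  have rr: "r * r = 3" by (simp add: r_def)
  have rr2: "r * (r * u) = 3 * u" for u using rr by (metis mult.assoc)
  have Re1: "Re (z* om) = -x/2 - r*y/2" and Im1: "Im (z* om) = r*x/2 - y/2"
    by (simp_all add: zxy om_def r_def algebra_simps)
  have Re2: "Re (z* om^2) = -x/2 + r*y/2" and Im2: "Im (z* om^2) = -r*x/2 - y/2"
    by (simp_all add: zxy om2 r_def algebra_simps)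
  have Re0: "Re z = x" and Im0: "Im z = y" by (simp_all add: zxy)
  define X where "X = r * x"
  have rpos: "r > 0" by (simp add: r_def)
  have n0: "\<not>(y=0 \<and> X\<le>0)"
  proof
    assume a: "y=0 \<and> X\<le>0"
    then have "x \<le> 0" using rpos by (simp add: X_def mult_le_0_iff)
    then have "z \<in> neg_ray 0" using a by (auto simp: neg_ray_def z0 zxy complex_eq_iff intro!: exI[of _ x])
    then show False using assms(2) by auto
  qed
  have n1: "\<not>(y = -X \<and> X \<ge> 0)"
  proof
    assume a: "y = -X \<and> X \<ge> 0"
    then have "x \<ge> 0" using rpos by (simp add: X_def zero_le_mult_iff)
    have "z = complex_of_real (-2*x) * om"
      using a by (simp add: zxy om_def complex_eq_iff X_def r_def)
    then have "z = complex_of_real (-2*x) * zeta3 1" unfolding z1 .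
    then have "z \<in> neg_ray 1" using \<open>x \<ge> 0\<close> by (auto simp: neg_ray_def intro!: exI[of _ "-2*x"])
    then show False using assms(2) by auto
  qed
  have n2: "\<not>(y = X \<and> X \<ge> 0)"
  proof
    assume a: "y = X \<and> X \<ge> 0"
    then have "x \<ge> 0" using rpos by (simp add: X_def zero_le_mult_iff)
    have "z = complex_of_real (-2*x) * om^2"
      using a unfolding om2 by (simp add: zxy complex_eq_iff X_def r_def)
    then have "z = complex_of_real (-2*x) * zeta3 2" unfolding z2 .
    then have "z \<in> neg_ray 2" using \<open>x \<ge> 0\<close> by (auto simp: neg_ray_def intro!: exI[of _ "-2*x"])
    then show False using assms(2) by auto
  qed
  have e1: "r * Re (z* om) = -X/2 - 3*y/2"
  proof -
    have "r * (-x/2 - r*y/2) = -(r*x)/2 - (r*r)*y/2" by (simp add: algebra_simps)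
    then show ?thesis unfolding Re1 X_def rr by simp
  qed
  have e2: "r * Re (z* om^2) = -X/2 + 3*y/2"
  proof -
    have "r * (-x/2 + r*y/2) = -(r*x)/2 + (r*r)*y/2" by (simp add: algebra_simps)
    then show ?thesis unfolding Re2 X_def rr by simp
  qed
  have f1: "Im (z* om) = X/2 - y/2" unfolding Im1 X_def by simp
  have f2: "Im (z* om^2) = -X/2 - y/2" unfolding Im2 X_def by simp
  have g0: "r * Re z = X" by (simp add: Re0 X_def)
  from sectors[OF n0 n1 n2] show False
  proof (elim disjE conjE)
    assume "y \<noteq> 0" "X + \<bar>y\<bar> \<le> 0"
    show False
    proof (rule noM[of T2 T1 T0 z])
      show "T2 + T1 + T0 = 0" using sum by (simp add: algebra_simps)
      show "T2 * T1 * T0 = 1" using prod by (simp add: algebra_simps)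
      have "Re (z* om^2) = Re (z* om) + sqrt 3 * Im z" unfolding Re1 Re2 Im0 r_def[symmetric] by (simp add: algebra_simps)
      then show "norm T2 = norm T1 * exp (sqrt 3 * Im z)" by (metis nT1 nT2 exp_add)
      show "T0^3 = exp (3*z)" by (rule cT0)
      show "Im z \<noteq> 0" using \<open>y \<noteq> 0\<close> Im0 by simp
      show "sqrt 3 * Re z + \<bar>Im z\<bar> \<le> 0" using g0 Im0 \<open>X + \<bar>y\<bar> \<le> 0\<close> by (simp add: r_def)
    qed
  next
    assume a: "X/2 - y/2 \<noteq> 0" "-X/2 - 3*y/2 + \<bar>X/2 - y/2\<bar> \<le> 0"
    show False
    proof (rule noM[of T0 T2 T1 "z* om"])
      show "T0 + T2 + T1 = 0" using sum by (simp add: algebra_simps)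
      show "T0 * T2 * T1 = 1" using prod by (simp add: algebra_simps)
      have "Re z = Re (z* om^2) + sqrt 3 * Im (z* om)"
        unfolding Re0 Re2 Im1 r_def[symmetric] by (simp add: algebra_simps rr2)
      then show "norm T0 = norm T2 * exp (sqrt 3 * Im (z* om))" by (metis nT0 nT2 exp_add)
      show "T1^3 = exp (3*(z* om))" by (rule cT1)
      show "Im (z* om) \<noteq> 0" using a f1 by simp
      show "sqrt 3 * Re (z* om) + \<bar>Im (z* om)\<bar> \<le> 0" using a e1 f1 by (simp add: r_def)
    qed
  next
    assume a: "-X/2 - y/2 \<noteq> 0" "-X/2 + 3*y/2 + \<bar>-X/2 - y/2\<bar> \<le> 0"
    show False
    proof (rule noM[of T1 T0 T2 "z* om^2"])
      show "T1 + T0 + T2 = 0" using sum by (simp add: algebra_simps)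
      show "T1 * T0 * T2 = 1" using prod by (simp add: algebra_simps)
      have "Re (z* om) = Re z + sqrt 3 * Im (z* om^2)"
        unfolding Re0 Re1 Im2 r_def[symmetric] by (simp add: algebra_simps rr2)
      then show "norm T1 = norm T0 * exp (sqrt 3 * Im (z* om^2))" by (metis nT0 nT1 exp_add)
      show "T2^3 = exp (3*(z* om^2))" by (rule cT2)
      show "Im (z* om^2) \<noteq> 0" using a f2 by simp
      show "sqrt 3 * Re (z* om^2) + \<bar>Im (z* om^2)\<bar> \<le> 0" using a e2 f2 by (simp add: r_def)
    qed
  qed
qed
end
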